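(* Consider the planar system $$\frac{dN}{dt}=rN\left(1-\frac{N}{K}-\frac{h}{w+N}\right)-\frac{aNP}{b+N^2},\qquad \frac{dP}{dt}=\frac{cNP}{b+N^2}-\delta P,$$ where $r,K,h,w,a,b,c,\delta$ are positive constants. Suppose $K>w$ and the Allee effect is strong, i.e. $h>w$. Let $$N_{1}=\frac{(K-w)+\sqrt{(K-w)^2-4K(h-w)}}{2},\quad N_{2}=\frac{(K-w)-\sqrt{(K-w)^2-4K(h-w)}}{2},\quad N_3=\frac{K-w}{2},$$ and $E_n=(N_n,0)$ for $n=1,2,3$ (whenever these are equilibria). (i) If $h=\frac{(K+w)^2}{4K}$ and $c<\frac{\delta(b+N_3^2)}{N_3}$, then the axial equilibrium point $E_3$ is non-hyperbolic. (ii) If $h<\frac{(K+w)^2}{4K}$, and $c<\frac{\delta(b+N_n^2)}{N_n}$ for $n=1,2$, then the axial equilibrium point $E_1$ is locally asymptotically stable and the axial equilibrium point $E_2$ is unstable (a saddle).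
   Context: $N(t)$ is the prey density and $P(t)$ the predator density. An equilibrium is non-hyperbolic if the Jacobian matrix of the system at it has an eigenvalue with zero real part. *)

theory Defs
  imports "HOL-Analysis.Analysis"
begin

definition pp_field ::
  "real \<Rightarrow> real \<Rightarrow> real \<Rightarrow> real \<Rightarrow> real \<Rightarrow> real \<Rightarrow> real \<Rightarrow> real
   \<Rightarrow> real \<times> real \<Rightarrow> real \<times> real" where
  "pp_field r K h w a b c \<delta> z =
     (let N = fst z; P = snd z in
      (r * N * (1 - N / K - h / (w + N)) - a * N * P / (b + N^2),
       c * N * P / (b + N^2) - \<delta> * P))"

definition equilibrium :: "(real \<times> real \<Rightarrow> real \<times> real) \<Rightarrow> real \<times> real \<Rightarrow> bool" where
  "equilibrium F e \<longleftrightarrow> F e = 0"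

definition jac11 :: "(real \<times> real \<Rightarrow> real \<times> real) \<Rightarrow> real \<times> real \<Rightarrow> real" where
  "jac11 F e = deriv (\<lambda>n. fst (F (n, snd e))) (fst e)"
definition jac12 :: "(real \<times> real \<Rightarrow> real \<times> real) \<Rightarrow> real \<times> real \<Rightarrow> real" where
  "jac12 F e = deriv (\<lambda>p. fst (F (fst e, p))) (snd e)"
definition jac21 :: "(real \<times> real \<Rightarrow> real \<times> real) \<Rightarrow> real \<times> real \<Rightarrow> real" where
  "jac21 F e = deriv (\<lambda>n. snd (F (n, snd e))) (fst e)"
definition jac22 :: "(real \<times> real \<Rightarrow> real \<times> real) \<Rightarrow> real \<times> real \<Rightarrow> real" where
  "jac22 F e = deriv (\<lambda>p. snd (F (fst e, p))) (snd e)"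

definition jac_eigenvalue :: "(real \<times> real \<Rightarrow> real \<times> real) \<Rightarrow> real \<times> real \<Rightarrow> complex \<Rightarrow> bool" where
  "jac_eigenvalue F e l \<longleftrightarrow>
     (of_real (jac11 F e) - l) * (of_real (jac22 F e) - l)
       - of_real (jac12 F e) * of_real (jac21 F e) = 0"

definition non_hyperbolic :: "(real \<times> real \<Rightarrow> real \<times> real) \<Rightarrow> real \<times> real \<Rightarrow> bool" where
  "non_hyperbolic F e \<longleftrightarrow> equilibrium F e \<and> (\<exists>l. jac_eigenvalue F e l \<and> Re l = 0)"

definition saddle :: "(real \<times> real \<Rightarrow> real \<times> real) \<Rightarrow> real \<times> real \<Rightarrow> bool" where
  "saddle F e \<longleftrightarrow> equilibrium F e \<and>
     (\<exists>l1 l2 :: real. l1 < 0 \<and> 0 < l2 \<and>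
        jac_eigenvalue F e (of_real l1) \<and> jac_eigenvalue F e (of_real l2))"

definition forward_solution :: "(real \<times> real \<Rightarrow> real \<times> real) \<Rightarrow> (real \<Rightarrow> real \<times> real) \<Rightarrow> bool" where
  "forward_solution F x \<longleftrightarrow>
     (\<forall>t\<ge>0. (x has_vector_derivative F (x t)) (at t within {0..}))"

definition lyapunov_stable :: "(real \<times> real \<Rightarrow> real \<times> real) \<Rightarrow> real \<times> real \<Rightarrow> bool" where
  "lyapunov_stable F e \<longleftrightarrow>
     (\<forall>\<epsilon>>0. \<exists>\<delta>>0. \<forall>x. forward_solution F x \<and> dist (x 0) e < \<delta> \<longrightarrow>
        (\<forall>t\<ge>0. dist (x t) e < \<epsilon>))"

definition locally_attractive :: "(real \<times> real \<Rightarrow> real \<times> real) \<Rightarrow> real \<times> real \<Rightarrow> bool" where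
  "locally_attractive F e \<longleftrightarrow>
     (\<exists>\<eta>>0. \<forall>x. forward_solution F x \<and> dist (x 0) e < \<eta> \<longrightarrow> (x \<longlongrightarrow> e) at_top)"

definition locally_asymptotically_stable :: "(real \<times> real \<Rightarrow> real \<times> real) \<Rightarrow> real \<times> real \<Rightarrow> bool" where
  "locally_asymptotically_stable F e \<longleftrightarrow>
     equilibrium F e \<and> lyapunov_stable F e \<and> locally_attractive F e"

definition unstable :: "(real \<times> real \<Rightarrow> real \<times> real) \<Rightarrow> real \<times> real \<Rightarrow> bool" where
  "unstable F e \<longleftrightarrow> equilibrium F e \<and> \<not> lyapunov_stable F e"

end

theory Submission
  imports Defs
begin

lemma g_factor:
  fixes r K h w N N1 N2 :: real
  assumes "w + N \<noteq> 0" "K \<noteq> 0" "N1 + N2 = K - w" "N1 * N2 = K * (h - w)"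
  shows "r* N*(1 - N/K - h/(w+N)) = r* N*(N1-N)*(N-N2)/(K*(w+N))"
proof -
  have "1 - N/K - h/(w+N) = ((K-N)*(w+N) - K* h)/(K*(w+N))"
    using assms(1,2) by (simp add: field_simps)
  also have "(K-N)*(w+N) - K* h = (N1-N)*(N-N2)"
  proof -
    have "K* h = N1* N2 + K* w" using assms(4) by (simp add: algebra_simps)
    moreover have "K = N1 + N2 + w" using assms(3) by simp
    ultimately show ?thesis by (simp add: algebra_simps)
  qed
  finally show ?thesis by simp
qed

lemma pp_fst: "fst (pp_field r K h w a b c \<delta> (N,P)) = r* N*(1 - N/K - h/(w+N)) - a* N* P/(b+N^2)"
  by (simp add: pp_field_def)
lemma pp_snd: "snd (pp_field r K h w a b c \<delta> (N,P)) = c* N* P/(b+N^2) - \<delta>* P"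
  by (simp add: pp_field_def)

lemma jac11_ax:
  assumes "w + N \<noteq> 0" "K \<noteq> 0" "b > 0"
  shows "jac11 (pp_field r K h w a b c \<delta>) (N,0) = r*(1 - N/K - h/(w+N)) + r* N*(-1/K + h/(w+N)^2)"
proof -
  have e: "(\<lambda>n. fst (pp_field r K h w a b c \<delta> (n, snd (N,0::real)))) = (\<lambda>n. r* n*(1 - n/K - h/(w+n)))"
    by (simp add: pp_fst)
  have d1: "((\<lambda>n. 1 - n/K - h/(w+n)) has_real_derivative (-1/K + h/(w+N)^2)) (at N)"
    using assms
    by (auto intro!: derivative_eq_intros simp: power2_eq_square)
  have d2: "((\<lambda>n. r* n) has_real_derivative r) (at N)"
    by (auto intro!: derivative_eq_intros)
  from DERIV_mult[OF d2 d1] have "((\<lambda>n. r* n*(1 - n/K - h/(w+n))) has_real_derivative (r*(1 - N/K - h/(w+N)) + r* N*(-1/K + h/(w+N)^2))) (at N)"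
    by (rule DERIV_cong) (simp add: algebra_simps)
  then show ?thesis unfolding jac11_def e by (simp add: DERIV_imp_deriv)
qed

lemma jac21_ax: "jac21 (pp_field r K h w a b c \<delta>) (N,0) = 0"
proof -
  have e: "(\<lambda>n. snd (pp_field r K h w a b c \<delta> (n, snd (N,0::real)))) = (\<lambda>n. 0)"
    by (simp add: pp_snd)
  show ?thesis unfolding jac21_def e by simp
qed

lemma jac22_ax: assumes "b > 0" shows "jac22 (pp_field r K h w a b c \<delta>) (N,0) = c* N/(b+N^2) - \<delta>"
proof -
  have e: "(\<lambda>p. snd (pp_field r K h w a b c \<delta> (fst (N,0::real), p))) = (\<lambda>p. c* N/(b+N^2)* p - \<delta>* p)"
    by (simp add: pp_snd)
  have "((\<lambda>p. c* N/(b+N^2)* p - \<delta>* p) has_real_derivative (c* N/(b+N^2) - \<delta>)) (at 0)"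
    using assms add_pos_nonneg[of b "N^2"] by (auto intro!: derivative_eq_intros)
  then show ?thesis unfolding jac22_def e by (simp add: DERIV_imp_deriv)
qed

lemma eig_ax: "b > 0 \<Longrightarrow> jac_eigenvalue (pp_field r K h w a b c \<delta>) (N,0) l \<longleftrightarrow>
   (of_real (jac11 (pp_field r K h w a b c \<delta>) (N,0)) - l) * (of_real (c* N/(b+N^2) - \<delta>) - l) = 0"
  unfolding jac_eigenvalue_def jac21_ax by (simp add: jac22_ax)

lemma vd_fst: "(x has_vector_derivative D) F \<Longrightarrow> ((\<lambda>t. fst (x t)) has_real_derivative fst D) F"
  unfolding has_vector_derivative_def has_field_derivative_def
  apply (drule has_derivative_fst) 
  apply (erule has_derivative_eq_rhs) by (auto simp: mult.commute)
lemma vd_snd: "(x has_vector_derivative D) F \<Longrightarrow> ((\<lambda>t. snd (x t)) has_real_derivative snd D) F"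
  unfolding has_vector_derivative_def has_field_derivative_def
  apply (drule has_derivative_snd) 
  apply (erule has_derivative_eq_rhs) by (auto simp: mult.commute)

lemma lyap_core:
  fixes F :: "real \<times> real \<Rightarrow> real \<times> real" and N1 \<beta> \<kappa> R :: real and x :: "real \<Rightarrow> real \<times> real"
  assumes reg: "\<And>z. (fst z - N1)^2 + \<beta>*(snd z)^2 < R \<Longrightarrow>
      2*(fst z - N1)* fst (F z) + 2*\<beta>* snd z* snd (F z) \<le> -\<kappa> * ((fst z - N1)^2 + \<beta>*(snd z)^2)"
    and kp: "\<kappa> \<ge> 0" and bp: "\<beta> \<ge> 0"
    and sol: "forward_solution F x" and init: "(fst (x 0) - N1)^2 + \<beta>*(snd (x 0))^2 < R"
  shows "\<forall>t\<ge>0. (fst (x t) - N1)^2 + \<beta>*(snd (x t))^2 \<le> ((fst (x 0) - N1)^2 + \<beta>*(snd (x 0))^2) * exp(-\<kappa>*t)"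
proof -
  define W where "W t = (fst (x t) - N1)^2 + \<beta>*(snd (x t))^2" for t
  define D where "D t = 2*(fst (x t) - N1)* fst (F (x t)) + 2*\<beta>* snd(x t)* snd(F (x t))" for t
  define H where "H t = W t * exp (\<kappa>*t)" for t
  have der: "\<And>t. t \<ge> 0 \<Longrightarrow> (x has_vector_derivative F (x t)) (at t within {0..})"
    using sol unfolding forward_solution_def by auto
  have cont: "continuous_on {0..} x"
    using der by (metis atLeast_iff continuous_on_eq_continuous_within has_vector_derivative_continuous)
  have contW: "continuous_on {0..} W"
    unfolding W_def by (intro continuous_intros cont)
  have contH: "continuous_on {0..} H"
    unfolding H_def by (intro continuous_intros contW)
  have Wnn: "W t \<ge> 0" for t unfolding W_def using bp by simp
  have dW: "(W has_real_derivative D t) (at t)" if "t > 0" for t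
  proof -
    have d0: "(x has_vector_derivative F (x t)) (at t within {0..})"
      using der[of t] that by simp
    have "{0<..} \<subseteq> {0::real..}" by auto
    from has_vector_derivative_within_subset[OF d0 this]
    have "(x has_vector_derivative F (x t)) (at t within {0<..})" .
    then have dx: "(x has_vector_derivative F (x t)) (at t)"
      using at_within_open[of t "{0<..}"] that by simp
    show ?thesis unfolding W_def D_def
      using vd_fst[OF dx] vd_snd[OF dx]
      by (auto intro!: derivative_eq_intros)
  qed
  have dH: "(H has_real_derivative (D t + \<kappa> * W t) * exp (\<kappa>*t)) (at t)" if "t > 0" for t
    unfolding H_def using dW[OF that]
    by (auto intro!: derivative_eq_intros simp: algebra_simps)
  have mono: "H t \<le> H 0" if t: "t \<ge> 0" and below: "\<And>s. 0 < s \<Longrightarrow> s < t \<Longrightarrow> W s < R" for t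
  proof -
    have "H 0 \<ge> H t"
    proof (rule DERIV_nonpos_imp_decreasing_open[OF t])
      fix s assume s: "0 < s" "s < t"
      have "D s \<le> - \<kappa> * W s"
        using reg[of "x s"] below[OF s] unfolding D_def W_def by simp
      then have "(D s + \<kappa> * W s) * exp (\<kappa> * s) \<le> 0"
        by (simp add: mult_nonpos_nonneg)
      then show "\<exists>y. (H has_real_derivative y) (at s) \<and> y \<le> 0"
        using dH[OF s(1)] by blast
    next
      show "continuous_on {0..t} H" using contH by (rule continuous_on_subset) auto
    qed
    then show ?thesis by simp
  qed
  have allR: "\<forall>t\<ge>0. W t < R"
  proof (rule ccontr)
    assume "\<not> (\<forall>t\<ge>0. W t < R)"
    define S where "S = {0..} \<inter> W -` {R..}"
    have ne: "S \<noteq> {}" unfolding S_def using \<open>\<not> (\<forall>t\<ge>0. W t < R)\<close> by auto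
    have cl: "closed S" unfolding S_def
      by (rule continuous_closed_preimage[OF contW]) auto
    have bb: "bdd_below S" unfolding S_def by (auto intro: bdd_belowI[of _ 0])
    define T where "T = Inf S"
    have TS: "T \<in> S" unfolding T_def using closed_contains_Inf[OF ne bb cl] .
    have T0: "T \<ge> 0" "W T \<ge> R" using TS unfolding S_def by auto
    have below: "W s < R" if "0 < s" "s < T" for s
    proof (rule ccontr)
      assume "\<not> W s < R"
      then have "s \<in> S" unfolding S_def using that by auto
      then have "T \<le> s" unfolding T_def using bb by (rule cInf_lower)
      then show False using that by simp
    qed
    have "H T \<le> H 0" using mono[OF T0(1) below] .
    moreover have "H 0 = W 0" unfolding H_def by simp
    moreover have "H T \<ge> W T"
    proof -
      have "exp (\<kappa>*T) \<ge> 1" using kp T0 by simp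
      then have "W T * 1 \<le> W T * exp (\<kappa>*T)" using Wnn[of T] by (intro mult_left_mono) auto
      then show ?thesis unfolding H_def by simp
    qed
    moreover have "W 0 < R" using init unfolding W_def .
    ultimately show False using T0 by simp
  qed
  show ?thesis
  proof (intro allI impI)
    fix t :: real assume t: "t \<ge> 0"
    have "H t \<le> H 0" using mono[OF t] allR by auto
    then have "W t * exp (\<kappa>*t) \<le> W 0" unfolding H_def by simp
    then have "W t \<le> W 0 * exp (-\<kappa>*t)"
      by (simp add: exp_minus field_simps)
    then show "(fst (x t) - N1)^2 + \<beta>*(snd (x t))^2 \<le> ((fst (x 0) - N1)^2 + \<beta>*(snd (x 0))^2) * exp(-\<kappa>*t)"
      unfolding W_def .
  qed
qed

lemma inv_sol:
  fixes T G :: "real \<Rightarrow> real" and lo hi N0 :: real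
  assumes lohi: "lo < N0" "N0 < hi"
    and dT: "\<And>N. lo < N \<Longrightarrow> N < hi \<Longrightarrow> (T has_real_derivative inverse (G N)) (at N) \<and> G N > 0"
    and unb: "\<And>y. \<exists>N. N0 \<le> N \<and> N < hi \<and> T N \<ge> y"
  shows "\<exists>\<phi>. \<phi> 0 = N0 \<and> (\<forall>t\<ge>0. lo < \<phi> t \<and> \<phi> t < hi \<and> (\<phi> has_real_derivative G (\<phi> t)) (at t))
            \<and> (\<forall>N. N0 \<le> N \<and> N < hi \<longrightarrow> \<phi> (T N - T N0) = N)
            \<and> (\<forall>N. N0 \<le> N \<and> N < hi \<longrightarrow> T N0 \<le> T N)"
proof -
  define a where "a = (lo + N0) / 2"
  have a: "lo < a" "a < N0" using lohi unfolding a_def by auto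
  have mono: "T u < T v" if "lo < u" "u < v" "v < hi" for u v
  proof (rule DERIV_pos_imp_increasing[OF that(2)])
    fix z assume "u \<le> z" "z \<le> v"
    then have "lo < z" "z < hi" using that by auto
    from dT[OF this] show "\<exists>y. (T has_real_derivative y) (at z) \<and> y > 0" by auto
  qed
  have contT: "isCont T z" if "lo < z" "z < hi" for z
    using dT[OF that] DERIV_isCont by blast
  have ex: "\<exists>N. a < N \<and> N < hi \<and> T N = y" if y: "y > T a" for y
  proof -
    obtain Nb where Nb: "N0 \<le> Nb" "Nb < hi" "T Nb \<ge> y" using unb by blast
    have "a \<le> Nb" using Nb a by simp
    have "continuous_on {a..Nb} T"
      using a Nb by (intro continuous_at_imp_continuous_on ballI contT) auto
    from IVT'[of T a y Nb, OF _ Nb(3) \<open>a \<le> Nb\<close> this] y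
    obtain N where N: "a \<le> N" "N \<le> Nb" "T N = y" by auto
    with y have "N \<noteq> a" by auto
    with N Nb show ?thesis by (intro exI[of _ N]) auto
  qed
  have uniq: "N = M" if "a < N" "N < hi" "a < M" "M < hi" "T N = T M" for N M
    using mono[of N M] mono[of M N] that a by (cases N M rule: linorder_cases) auto
  define \<psi> where "\<psi> y = (THE N. a < N \<and> N < hi \<and> T N = y)" for y
  have \<psi>: "a < \<psi> y \<and> \<psi> y < hi \<and> T (\<psi> y) = y" if "y > T a" for y
  proof -
    have "\<exists>!N. a < N \<and> N < hi \<and> T N = y" using ex[OF that] uniq by blast
    from theI'[OF this] show ?thesis unfolding \<psi>_def .
  qed
  have \<psi>T: "\<psi> (T N) = N" if "a < N" "N < hi" for N
  proof -
    have "T N > T a" using mono[of a N] that a by auto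
    from \<psi>[OF this] that uniq show ?thesis by blast
  qed
  have d\<psi>: "(\<psi> has_real_derivative G (\<psi> y)) (at y)" if y: "y > T a" for y
  proof -
    have p: "a < \<psi> y" "\<psi> y < hi" using \<psi>[OF y] by auto
    have lo': "lo < \<psi> y" using p a by simp
    from dT[OF lo' p(2)] have D: "(T has_real_derivative inverse (G (\<psi> y))) (at (\<psi> y))" "G (\<psi> y) > 0" by auto
    define d where "d = min (\<psi> y - a) (hi - \<psi> y) / 2"
    have d: "d > 0" using p unfolding d_def by auto
    have "isCont \<psi> (T (\<psi> y))"
    proof (rule isCont_inverse_function[OF d, of "\<psi> y" \<psi> T])
      fix z assume "\<bar>z - \<psi> y\<bar> \<le> d"
      then have z: "a < z" "z < hi" using p unfolding d_def by (auto simp: abs_if split: if_splits)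
      show "\<psi> (T z) = z" using \<psi>T[OF z] .
      show "isCont T z" using contT z a by auto
    qed
    then have ic: "isCont \<psi> y" using \<psi>[OF y] by simp
    have "(\<psi> has_real_derivative inverse (inverse (G (\<psi> y)))) (at y)"
    proof (rule DERIV_inverse_function[OF D(1) _ _ _ _ ic, of "T a" "y + 1"])
      show "inverse (G (\<psi> y)) \<noteq> 0" using D(2) by simp
      show "T a < y" "y < y + 1" using y by auto
      show "\<And>z. T a < z \<Longrightarrow> z < y + 1 \<Longrightarrow> T (\<psi> z) = z" using \<psi> by blast
    qed
    then show ?thesis by simp
  qed
  have TaN0: "T a < T N0" using mono[OF a(1) a(2) lohi(2)] .
  define \<phi> where "\<phi> t = \<psi> (t + T N0)" for t
  show ?thesis
  proof (intro exI conjI allI impI)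
    show "\<phi> 0 = N0" unfolding \<phi>_def using \<psi>T[OF a(2) lohi(2)] by simp
  next
    fix t :: real assume t: "t \<ge> 0"
    have y: "t + T N0 > T a" using t TaN0 by simp
    show "lo < \<phi> t" "\<phi> t < hi" unfolding \<phi>_def using \<psi>[OF y] a by auto
    have "((\<lambda>t. t + T N0) has_real_derivative 1) (at t)" by (auto intro!: derivative_eq_intros)
    from DERIV_chain2[OF d\<psi>[OF y] this]
    show "(\<phi> has_real_derivative G (\<phi> t)) (at t)" unfolding \<phi>_def by simp
  next
    fix N assume N: "N0 \<le> N \<and> N < hi"
    show "\<phi> (T N - T N0) = N" unfolding \<phi>_def using \<psi>T[of N] N a by simp
  next
    fix N assume N: "N0 \<le> N \<and> N < hi"
    show "T N0 \<le> T N" using mono[of N0 N] N lohi by (cases "N = N0") auto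
  qed
qed

lemma exp_lim: assumes "(\<kappa>::real) > 0" shows "((\<lambda>t. sqrt (V * exp (-\<kappa>* t))) \<longlongrightarrow> 0) at_top"
proof -
  have *: "((\<lambda>t. exp (- t * \<kappa>)) \<longlongrightarrow> 0) at_top"
    using assms
    by (auto intro!: exp_at_bot[THEN filterlim_compose] filterlim_tendsto_pos_mult_at_top filterlim_ident
             simp: filterlim_uminus_at_bot mult.commute[of _ \<kappa>])
  have "((\<lambda>t. sqrt (V * exp (- t * \<kappa>))) \<longlongrightarrow> sqrt (V * 0)) at_top"
    by (intro tendsto_intros *)
  then show ?thesis by (simp add: mult.commute)
qed

lemma cont_nbhd:
  fixes f :: "real \<Rightarrow> real"
  assumes "isCont f x" "f x < c"
  shows "\<exists>d>0. \<forall>y. \<bar>y - x\<bar> < d \<longrightarrow> f y < c"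
proof -
  from assms(1) have "f \<midarrow>x\<rightarrow> f x" by (simp add: isCont_def)
  then obtain s where s: "s > 0" "\<And>y. y \<noteq> x \<and> norm (y - x) < s \<Longrightarrow> norm (f y - f x) < c - f x"
    unfolding LIM_eq using assms(2) by (metis diff_gt_0_iff_gt)
  show ?thesis
  proof (intro exI[of _ s] conjI allI impI)
    fix y assume "\<bar>y - x\<bar> < s"
    then show "f y < c" using s(2)[of y] assms(2) by (cases "y = x") auto
  qed (use s in auto)
qed

lemma ineq:
  fixes u P q p m q0 p0 M \<beta> \<kappa> :: real
  assumes "q \<le> -q0" "p \<le> -p0" "\<bar>m\<bar> \<le> M" "q0 > 0" "p0 > 0" "\<beta> \<ge> M^2/(q0 * p0)" "\<beta> \<ge> 0"
    "\<kappa> \<le> q0" "\<kappa> \<le> p0" "\<kappa> \<ge> 0"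
  shows "2 * u * (u * q - m * P) + 2 * \<beta> * P * (p * P) \<le> -\<kappa> * (u^2 + \<beta> * P^2)"
proof -
  have h1: "2 * u * (u * q) \<le> -2 * q0 * u^2"
  proof -
    have "u^2 * q \<le> u^2 * (-q0)" using assms(1) by (intro mult_left_mono) auto
    then show ?thesis by (simp add: power2_eq_square algebra_simps)
  qed
  have h2: "2 * \<beta> * P * (p * P) \<le> -2 * \<beta> * p0 * P^2"
  proof -
    have "(\<beta> * P^2) * p \<le> (\<beta> * P^2) * (-p0)" using assms(2,7) by (intro mult_left_mono) auto
    then show ?thesis by (simp add: power2_eq_square algebra_simps)
  qed
  have h3: "- (2 * u * m * P) \<le> 2 * M * \<bar>u\<bar> * \<bar>P\<bar>"
  proof -
    have "- (u * m * P) \<le> \<bar>u * m * P\<bar>" by simp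
    also have "\<dots> = \<bar>m\<bar> * (\<bar>u\<bar> * \<bar>P\<bar>)" by (simp add: abs_mult)
    also have "\<dots> \<le> M * (\<bar>u\<bar> * \<bar>P\<bar>)" using assms(3) by (intro mult_right_mono) auto
    finally show ?thesis by (simp add: algebra_simps)
  qed
  have h4: "2 * M * \<bar>u\<bar> * \<bar>P\<bar> \<le> q0 * u^2 + (M^2/q0) * P^2"
  proof -
    have "0 \<le> (q0 * \<bar>u\<bar> - M * \<bar>P\<bar>)^2" by simp
    then have "2 * q0 * M * \<bar>u\<bar> * \<bar>P\<bar> \<le> q0^2 * u^2 + M^2 * P^2"
      by (simp add: power2_eq_square algebra_simps)
    then have "q0 * (2 * M * \<bar>u\<bar> * \<bar>P\<bar>) \<le> q0 * (q0 * u^2 + (M^2/q0) * P^2)"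
      using assms(4) by (simp add: power2_eq_square algebra_simps)
    then show ?thesis using assms(4) by simp
  qed
  have h5: "(M^2/q0) * P^2 \<le> \<beta> * p0 * P^2"
  proof -
    have "M^2/q0 = (M^2/(q0 * p0)) * p0" using assms(4,5) by simp
    also have "\<dots> \<le> \<beta> * p0" using assms(5,6) by (intro mult_right_mono) auto
    finally show ?thesis by (intro mult_right_mono) auto
  qed
  have h6: "-q0 * u^2 - \<beta> * p0 * P^2 \<le> -\<kappa> * (u^2 + \<beta> * P^2)"
  proof -
    have "\<kappa> * u^2 \<le> q0 * u^2" using assms(8) by (intro mult_right_mono) auto
    moreover have "\<kappa> * (\<beta> * P^2) \<le> p0 * (\<beta> * P^2)" using assms(9,7) by (intro mult_right_mono) auto
    ultimately show ?thesis by (simp add: algebra_simps)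
  qed
  have "2 * u * (u * q - m * P) + 2 * \<beta> * P * (p * P) = 2 * u * (u * q) - 2 * u * m * P + 2 * \<beta> * P * (p * P)"
    by (simp add: algebra_simps)
  then show ?thesis using h1 h2 h3 h4 h5 h6 by linarith
qed

lemma pf:
  fixes r K w N N1 N2 :: real
  assumes "N \<noteq> 0" "N1 \<noteq> N" "N \<noteq> N2" "N1 \<noteq> N2" "N1 \<noteq> 0" "N2 \<noteq> 0" "r \<noteq> 0" "w + N \<noteq> 0" "K \<noteq> 0"
  shows "(-K* w/(r* N1* N2)) / N + (K*(w+N1)/(r* N1*(N1-N2))) / (N1-N) + (K*(w+N2)/(r* N2*(N1-N2))) / (N-N2)
     = inverse (r* N*(N1-N)*(N-N2)/(K*(w+N)))"
proof -
  obtain u v z s where uv: "u = N1 - N" "v = N - N2" "z = N1 - N2" "s = w + N" by blast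
  have nz: "u \<noteq> 0" "v \<noteq> 0" "z \<noteq> 0" "s \<noteq> 0" using assms uv by auto
  have rel: "N1 = N + u" "N2 = N - v" "z = u + v" "w = s - N" using uv by auto
  have "(-K* w/(r* N1* N2)) / N + (K*(w+N1)/(r* N1* z)) / u + (K*(w+N2)/(r* N2* z)) / v = K* s/(r* N* u* v)"
    using nz assms by (simp add: field_simps) (use rel in algebra)
  then show ?thesis using uv by simp
qed

lemma j11_val:
  fixes r K h w N :: real
  assumes "N^2 - (K-w)* N + K*(h-w) = 0" "w + N > 0" "K > 0"
  shows "r*(1 - N/K - h/(w+N)) + r* N*(-1/K + h/(w+N)^2) = r* N*(K-w-2* N)/(K*(w+N))"
proof -
  obtain s where s: "s = w + N" by blast
  have sp: "s \<noteq> 0" using assms s by simp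
  have Kh: "K* h = (K-N)* s" using assms(1) s by algebra
  have "r*(1 - N/K - h/s) + r* N*(-1/K + h/s^2) = r* N*(K-w-2* N)/(K* s)"
    using sp assms(3) by (simp add: field_simps power2_eq_square) (use Kh s in algebra)
  then show ?thesis using s by simp
qed

lemma eq_ax: "equilibrium (pp_field r K h w a b c \<delta>) (N,0) \<longleftrightarrow> r * N * (1 - N/K - h/(w+N)) = 0"
  by (simp add: equilibrium_def pp_field_def prod_eq_iff)

lemma dist_e: "dist z (N1, 0::real) = sqrt ((fst z - N1)^2 + (snd z)^2)"
  by (cases z) (simp add: dist_Pair_Pair dist_real_def)

lemma part1:
  fixes r K h w a b c \<delta> :: real
  assumes pos: "r > 0" "K > 0" "h > 0" "w > 0" "a > 0" "b > 0" "c > 0" "\<delta> > 0"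
    and Kw: "K > w" and hh: "h = (K + w)^2 / (4 * K)"
  shows "non_hyperbolic (pp_field r K h w a b c \<delta>) ((K - w) / 2, 0)"
proof -
  define N3 where "N3 = (K - w) / 2"
  have wN: "w + N3 = (K + w) / 2" unfolding N3_def by (simp add: field_simps)
  have wNp: "w + N3 > 0" using wN pos by simp
  have Kw0: "K + w \<noteq> 0" using pos by simp
  have hK: "K * K + (w * w + K * (w * 2)) = K * (h * 4)" using hh pos by (simp add: field_simps power2_eq_square)
  have hq: "h/(w+N3) = (K + w) / (2 * K)"
    unfolding wN using pos Kw0 by (simp add: divide_simps power2_eq_square) (use hK in algebra)
  have g0: "1 - N3/K - h/(w+N3) = 0"
    unfolding hq N3_def using pos hK by (simp add: field_simps)
  have h2: "h/(w+N3)^2 = 1/K"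
    unfolding wN using pos Kw0 by (simp add: divide_simps power2_eq_square) (use hK in algebra)
  have j: "jac11 (pp_field r K h w a b c \<delta>) (N3,0) = 0"
    using jac11_ax[of w N3 K b r h a c \<delta>] wNp pos g0 h2 by simp
  show ?thesis
    unfolding non_hyperbolic_def N3_def[symmetric]
  proof (intro conjI exI[of _ 0])
    show "equilibrium (pp_field r K h w a b c \<delta>) (N3, 0)" unfolding eq_ax g0 by simp
    show "jac_eigenvalue (pp_field r K h w a b c \<delta>) (N3, 0) 0" unfolding eig_ax[OF pos(6)] j by simp
  qed simp
qed

lemma quad: "N1 + N2 = K - w \<Longrightarrow> N1 * N2 = K*(h-w) \<Longrightarrow> N = N1 \<or> N = N2 \<Longrightarrow> N^2 - (K-w)*N + K*(h-w) = (0::real)"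
  by (auto simp: power2_eq_square algebra_simps)

lemma saddle_N2:
  fixes r K h w a b c \<delta> N1 N2 :: real
  assumes pos: "r > 0" "K > 0" "h > 0" "w > 0" "a > 0" "b > 0" "c > 0" "\<delta> > 0"
    and N12: "N1 + N2 = K - w" "N1 * N2 = K*(h-w)" "0 < N2" "N2 < N1"
    and c2: "c < \<delta> * (b + N2^2) / N2"
  shows "saddle (pp_field r K h w a b c \<delta>) (N2, 0)"
proof -
  have wN: "w + N2 > 0" "w + N2 \<noteq> 0" using pos N12 by auto
  have eq: "r * N2 * (1 - N2/K - h/(w+N2)) = 0"
    using g_factor[OF wN(2) _ N12(1,2), of r] pos by simp
  then have g0: "1 - N2/K - h/(w+N2) = 0" using pos N12 by simp
  have j: "jac11 (pp_field r K h w a b c \<delta>) (N2,0) = r * N2 * (K - w - 2*N2)/(K*(w+N2))"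
    using jac11_ax[of w N2 K b r h a c \<delta>] j11_val[OF quad[OF N12(1,2)] wN(1) pos(2)] wN pos by simp
  have jpos: "jac11 (pp_field r K h w a b c \<delta>) (N2,0) > 0"
    unfolding j using pos N12 wN by (intro divide_pos_pos mult_pos_pos) auto
  have pneg: "c * N2/(b+N2^2) - \<delta> < 0"
  proof -
    have "c * N2 < \<delta> * (b + N2^2)" using c2 N12(3) by (simp add: pos_less_divide_eq)
    then have "c * N2 / (b + N2^2) < \<delta>" using pos by (simp add: divide_less_eq add_pos_nonneg)
    then show ?thesis by simp
  qed
  show ?thesis unfolding saddle_def
  proof (intro conjI exI)
    show "equilibrium (pp_field r K h w a b c \<delta>) (N2, 0)" unfolding eq_ax using eq .
    show "c * N2/(b+N2^2) - \<delta> < 0" by (rule pneg)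
    show "0 < jac11 (pp_field r K h w a b c \<delta>) (N2,0)" by (rule jpos)
    show "jac_eigenvalue (pp_field r K h w a b c \<delta>) (N2, 0) (complex_of_real (c * N2/(b+N2^2) - \<delta>))"
      unfolding eig_ax[OF pos(6)] by simp
    show "jac_eigenvalue (pp_field r K h w a b c \<delta>) (N2, 0) (complex_of_real (jac11 (pp_field r K h w a b c \<delta>) (N2,0)))"
      unfolding eig_ax[OF pos(6)] by simp
  qed
qed

lemma unstable_N2:
  fixes r K h w a b c \<delta> N1 N2 :: real
  assumes pos: "r > 0" "K > 0" "h > 0" "w > 0" "a > 0" "b > 0" "c > 0" "\<delta> > 0"
    and N12: "N1 + N2 = K - w" "N1 * N2 = K*(h-w)" "0 < N2" "N2 < N1"
  shows "unstable (pp_field r K h w a b c \<delta>) (N2, 0)"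
proof -
  define F where "F = pp_field r K h w a b c \<delta>"
  have wN: "w + N2 \<noteq> 0" using pos N12 by auto
  have eq: "r * N2 * (1 - N2/K - h/(w+N2)) = 0"
    using g_factor[OF wN _ N12(1,2), of r] pos by simp
  define G where "G N = r * N * (N1 - N) * (N - N2) / (K * (w + N))" for N
  define A where "A = -K * w/(r * N1 * N2)"
  define B where "B = K * (w+N1)/(r * N1 * (N1-N2))"
  define C where "C = K * (w+N2)/(r * N2 * (N1-N2))"
  define T where "T N = A * ln N - B * ln (N1 - N) + C * ln (N - N2)" for N
  have Aneg: "A \<le> 0" unfolding A_def using pos N12 by (simp add: divide_nonpos_pos)
  have Bpos: "B > 0" unfolding B_def using pos N12 by (intro divide_pos_pos mult_pos_pos) auto
  have Cpos: "C > 0" unfolding C_def using pos N12 by (intro divide_pos_pos mult_pos_pos) auto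
  have dT: "(T has_real_derivative inverse (G N)) (at N) \<and> G N > 0" if N: "N2 < N" "N < N1" for N
  proof
    have "(T has_real_derivative (A / N + B / (N1 - N) + C / (N - N2))) (at N)"
      unfolding T_def using N N12 by (auto intro!: derivative_eq_intros simp: divide_inverse)
    moreover have "A / N + B / (N1 - N) + C / (N - N2) = inverse (G N)"
      unfolding A_def B_def C_def G_def using N N12 pos by (intro pf) auto
    ultimately show "(T has_real_derivative inverse (G N)) (at N)" by simp
    show "G N > 0" unfolding G_def using N N12 pos by (intro divide_pos_pos mult_pos_pos) auto
  qed
  have Fsol: "F (N, 0) = (G N, 0)" if "N2 < N" "N < N1" for N
  proof -
    have "w + N \<noteq> 0" using that pos N12 by auto
    from g_factor[OF this _ N12(1,2), of r] pos
    show ?thesis unfolding F_def G_def by (simp add: prod_eq_iff pp_fst pp_snd)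
  qed
  define \<epsilon> where "\<epsilon> = (N1 - N2) / 2"
  have \<epsilon>: "\<epsilon> > 0" unfolding \<epsilon>_def using N12 by simp
  have "\<not> lyapunov_stable F (N2, 0)"
  proof
    assume "lyapunov_stable F (N2, 0)"
    then obtain d where d: "d > 0" and st: "\<And>x. forward_solution F x \<and> dist (x 0) (N2, 0) < d \<Longrightarrow> \<forall>t\<ge>0. dist (x t) (N2, 0) < \<epsilon>"
      unfolding lyapunov_stable_def using \<epsilon> by blast
    define N0 where "N0 = N2 + min d \<epsilon> / 2"
    define m where "m = (N1 + N2) / 2"
    have N0: "N2 < N0" "N0 < N1" "N0 \<le> m" "m < N1" "N2 < m" unfolding N0_def m_def using d \<epsilon> unfolding \<epsilon>_def by (auto simp: min_def field_simps)
    have unb: "\<exists>N. N0 \<le> N \<and> N < N1 \<and> T N \<ge> y" for y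
    proof -
      define L where "L = A * ln N1 + C * ln (m - N2)"
      define e where "e = min (exp ((L - y) / B)) (N1 - m)"
      have e: "e > 0" "e \<le> N1 - m" "e \<le> exp ((L - y) / B)" unfolding e_def using N0 by auto
      define N where "N = N1 - e"
      have N: "N0 \<le> N" "N < N1" "m \<le> N" "N > 0" unfolding N_def using e N0 N12 by auto
      have t1: "A * ln N \<ge> A * ln N1"
        using Aneg N by (intro mult_left_mono_neg) auto
      have t2: "C * ln (N - N2) \<ge> C * ln (m - N2)"
        using Cpos N N0 by (intro mult_left_mono) auto
      have "ln e \<le> (L - y) / B" using e by (metis ln_exp ln_le_cancel_iff exp_gt_zero)
      then have t3: "- B * ln e \<ge> y - L" using Bpos by (simp add: field_simps)
      have "T N = A * ln N - B * ln e + C * ln (N - N2)" unfolding T_def N_def by simp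
      then have "T N \<ge> y" using t1 t2 t3 unfolding L_def by linarith
      with N show ?thesis by blast
    qed
    obtain \<phi> where \<phi>0: "\<phi> 0 = N0"
      and \<phi>d: "\<forall>t\<ge>0. N2 < \<phi> t \<and> \<phi> t < N1 \<and> (\<phi> has_real_derivative G (\<phi> t)) (at t)"
      and \<phi>T: "\<forall>N. N0 \<le> N \<and> N < N1 \<longrightarrow> \<phi> (T N - T N0) = N"
      and Tm: "\<forall>N. N0 \<le> N \<and> N < N1 \<longrightarrow> T N0 \<le> T N"
      using inv_sol[of N2 N0 N1 T G, OF N0(1,2) dT unb] by blast
    define x where "x t = (\<phi> t, 0::real)" for t
    have fs: "forward_solution F x" unfolding forward_solution_def
    proof (intro allI impI)
      fix t :: real assume t: "t \<ge> 0"
      have "(\<phi> has_vector_derivative G (\<phi> t)) (at t within {0..})"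
        using \<phi>d t by (simp add: has_real_derivative_iff_has_vector_derivative[symmetric] has_field_derivative_at_within)
      then have "(x has_vector_derivative (G (\<phi> t), 0)) (at t within {0..})"
        unfolding x_def by (intro has_vector_derivative_Pair) (auto intro: has_vector_derivative_const)
      then show "(x has_vector_derivative F (x t)) (at t within {0..})"
        using Fsol[of "\<phi> t"] \<phi>d t unfolding x_def by simp
    qed
    have "dist (x 0) (N2, 0) < d" unfolding x_def \<phi>0 using d \<epsilon> by (simp add: dist_Pair_Pair dist_real_def N0_def)
    with st fs have all: "\<forall>t\<ge>0. dist (x t) (N2, 0) < \<epsilon>" by blast
    have "T m - T N0 \<ge> 0" using Tm N0 by auto
    with all have "dist (x (T m - T N0)) (N2, 0) < \<epsilon>" by blast
    moreover have "x (T m - T N0) = (m, 0)" unfolding x_def using \<phi>T N0 by simp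
    ultimately show False unfolding m_def \<epsilon>_def by (simp add: dist_Pair_Pair dist_real_def)
  qed
  then show ?thesis unfolding unstable_def F_def eq_ax using eq by simp
qed

lemma las_N1:
  fixes r K h w a b c \<delta> N1 N2 :: real
  assumes pos: "r > 0" "K > 0" "h > 0" "w > 0" "a > 0" "b > 0" "c > 0" "\<delta> > 0"
    and N12: "N1 + N2 = K - w" "N1 * N2 = K*(h-w)" "0 < N2" "N2 < N1"
    and c1: "c < \<delta> * (b + N1^2) / N1"
  shows "locally_asymptotically_stable (pp_field r K h w a b c \<delta>) (N1, 0)"
proof -
  define F where "F = pp_field r K h w a b c \<delta>"
  have wN: "w + N1 \<noteq> 0" "w + N1 > 0" using pos N12 by auto
  have eq: "r * N1 * (1 - N1/K - h/(w+N1)) = 0"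
    using g_factor[OF wN(1) _ N12(1,2), of r] pos by simp
  define q where "q N = - r * N * (N - N2) / (K * (w + N))" for N
  define p where "p N = c * N / (b + N^2) - \<delta>" for N
  define mm where "mm N = a * N / (b + N^2)" for N
  have bN: "b + N^2 > 0" for N :: real using pos by (simp add: add_pos_nonneg)
  have Fdec: "fst (F (N, P)) = (N - N1) * q N - mm N * P \<and> snd (F (N, P)) = p N * P" if "w + N \<noteq> 0" for N P
  proof
    have "r * N * (1 - N/K - h/(w+N)) = r * N * (N1 - N) * (N - N2) / (K * (w + N))"
      using g_factor[OF that _ N12(1,2), of r] pos by simp
    also have "\<dots> = (N - N1) * q N" unfolding q_def by (simp add: algebra_simps)
    finally show "fst (F (N, P)) = (N - N1) * q N - mm N * P"
      unfolding F_def pp_fst mm_def by simp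
    show "snd (F (N, P)) = p N * P" unfolding F_def pp_snd p_def by (simp add: algebra_simps)
  qed
  have qN1: "q N1 < 0" unfolding q_def using pos N12 wN
    by (simp add: divide_neg_pos mult_pos_pos)
  have pN1: "p N1 < 0"
  proof -
    have "c * N1 < \<delta> * (b + N1^2)" using c1 N12 by (simp add: pos_less_divide_eq)
    then have "c * N1 / (b + N1^2) < \<delta>" using bN[of N1] by (simp add: divide_less_eq)
    then show ?thesis unfolding p_def by simp
  qed
  define q0 where "q0 = - q N1 / 2"
  define p0 where "p0 = - p N1 / 2"
  define M where "M = \<bar>mm N1\<bar> + 1"
  have q0: "q0 > 0" "q N1 < -q0" unfolding q0_def using qN1 by auto
  have p0: "p0 > 0" "p N1 < -p0" unfolding p0_def using pN1 by auto
  have Mp: "M > 0" "\<bar>mm N1\<bar> < M" unfolding M_def by auto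
  have "isCont q N1" unfolding q_def using wN pos by (intro continuous_intros) auto
  from cont_nbhd[OF this q0(2)] obtain d1 where d1: "d1 > 0" "\<And>y. \<bar>y - N1\<bar> < d1 \<Longrightarrow> q y < -q0" by blast
  have "isCont p N1" unfolding p_def using bN by (intro continuous_intros) (auto simp: less_imp_neq[symmetric])
  from cont_nbhd[OF this p0(2)] obtain d2 where d2: "d2 > 0" "\<And>y. \<bar>y - N1\<bar> < d2 \<Longrightarrow> p y < -p0" by blast
  have "isCont (\<lambda>N. \<bar>mm N\<bar>) N1" unfolding mm_def using bN by (intro continuous_intros) (auto simp: less_imp_neq[symmetric])
  from cont_nbhd[OF this Mp(2)] obtain d3 where d3: "d3 > 0" "\<And>y. \<bar>y - N1\<bar> < d3 \<Longrightarrow> \<bar>mm y\<bar> < M" by blast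
  define \<rho> where "\<rho> = min d1 (min d2 (min d3 N1))"
  have \<rho>: "\<rho> > 0" unfolding \<rho>_def using d1 d2 d3 N12 by auto
  have reg0: "q N < -q0 \<and> p N < -p0 \<and> \<bar>mm N\<bar> < M \<and> w + N > 0" if "\<bar>N - N1\<bar> < \<rho>" for N
    using that d1(2)[of N] d2(2)[of N] d3(2)[of N] pos unfolding \<rho>_def by auto
  define \<beta> where "\<beta> = max 1 (M^2 / (q0 * p0))"
  define \<kappa> where "\<kappa> = min q0 p0"
  have \<beta>: "\<beta> \<ge> 1" "\<beta> \<ge> M^2 / (q0 * p0)" "\<beta> > 0" unfolding \<beta>_def by auto
  have \<kappa>: "\<kappa> > 0" "\<kappa> \<le> q0" "\<kappa> \<le> p0" unfolding \<kappa>_def using q0 p0 by auto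
  define V where "V z = (fst z - N1)^2 + \<beta> * (snd z)^2" for z :: "real \<times> real"
  have reg: "2 * (fst z - N1) * fst (F z) + 2 * \<beta> * snd z * snd (F z) \<le> -\<kappa> * ((fst z - N1)^2 + \<beta> * (snd z)^2)"
    if "(fst z - N1)^2 + \<beta> * (snd z)^2 < \<rho>^2" for z
  proof -
    obtain N P where z: "z = (N, P)" by (cases z)
    have "\<beta> * P^2 \<ge> 0" using \<beta>(3) by (intro mult_nonneg_nonneg) auto
    moreover have "(N - N1)^2 + \<beta> * P^2 < \<rho>^2" using that unfolding z fst_conv snd_conv .
    ultimately have "(N - N1)^2 < \<rho>^2" by linarith
    then have "\<bar>N - N1\<bar>^2 < \<rho>^2" by (simp only: power2_abs)
    then have "\<bar>N - N1\<bar> < \<rho>" by (rule power2_less_imp_less) (use \<rho> in simp)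
    from reg0[OF this] have r0: "q N < -q0" "p N < -p0" "\<bar>mm N\<bar> < M" "w + N > 0" by auto
    from Fdec[of N P] r0(4) have Fz: "fst (F z) = (N - N1) * q N - mm N * P" "snd (F z) = p N * P" unfolding z by auto
    show ?thesis unfolding Fz unfolding z fst_conv snd_conv
      by (rule ineq[of "q N" q0 "p N" p0 "mm N" M \<beta> \<kappa> "N - N1" P]) (use r0 q0 p0 \<beta> \<kappa> in auto)
  qed
  have core: "\<forall>t\<ge>0. V (x t) \<le> V (x 0) * exp (-\<kappa> * t)" if "forward_solution F x" "V (x 0) < \<rho>^2" for x
    using lyap_core[of N1 \<beta> "\<rho>^2" F \<kappa> x, OF reg _ _ that(1)] that(2) \<kappa> \<beta> unfolding V_def by auto
  have dV: "(dist z (N1, 0))^2 \<le> V z" "V z \<le> \<beta> * (dist z (N1, 0))^2" for z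
  proof -
    have d2: "(dist z (N1, 0))^2 = (fst z - N1)^2 + (snd z)^2" unfolding dist_e by simp
    have "(snd z)^2 \<le> \<beta> * (snd z)^2" using \<beta> by (simp add: mult_le_cancel_right1)
    then show "(dist z (N1, 0))^2 \<le> V z" unfolding d2 V_def by simp
    have "(fst z - N1)^2 \<le> \<beta> * (fst z - N1)^2" using \<beta> by (simp add: mult_le_cancel_right1)
    then show "V z \<le> \<beta> * (dist z (N1, 0))^2" unfolding d2 V_def by (simp add: algebra_simps)
  qed
  have init: "V (x 0) < e^2" if "dist (x 0) (N1, 0) < e / sqrt \<beta>" "e > 0" for x e
  proof -
    have "(dist (x 0) (N1, 0))^2 < (e / sqrt \<beta>)^2"
      using that by (intro power_strict_mono) auto
    then have "\<beta> * (dist (x 0) (N1, 0))^2 < \<beta> * (e / sqrt \<beta>)^2" using \<beta> by simp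
    also have "\<beta> * (e / sqrt \<beta>)^2 = e^2" using \<beta> by (simp add: power_divide)
    finally show ?thesis using dV(2)[of "x 0"] by simp
  qed
  have LS: "lyapunov_stable F (N1, 0)" unfolding lyapunov_stable_def
  proof (intro allI impI)
    fix \<epsilon> :: real assume \<epsilon>: "\<epsilon> > 0"
    define e where "e = min \<rho> \<epsilon>"
    have e: "e > 0" "e \<le> \<rho>" "e \<le> \<epsilon>" unfolding e_def using \<rho> \<epsilon> by auto
    show "\<exists>\<delta>>0. \<forall>x. forward_solution F x \<and> dist (x 0) (N1, 0) < \<delta> \<longrightarrow> (\<forall>t\<ge>0. dist (x t) (N1, 0) < \<epsilon>)"
    proof (intro exI[of _ "e / sqrt \<beta>"] conjI allI impI)
      show "e / sqrt \<beta> > 0" using e \<beta> by simp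
      fix x t assume x: "forward_solution F x \<and> dist (x 0) (N1, 0) < e / sqrt \<beta>" and t: "(t::real) \<ge> 0"
      have V0: "V (x 0) < e^2" using init[of x e] x e by auto
      have "e^2 \<le> \<rho>^2" using e by (intro power_mono) auto
      with V0 have V0': "V (x 0) < \<rho>^2" by linarith
      have c1: "V (x t) \<le> V (x 0) * exp (-\<kappa> * t)" using core[of x] x t V0' by blast
      have Vnn: "0 \<le> V (x 0)" using dV(1)[of "x 0"] zero_le_power2[of "dist (x 0) (N1, 0)"] by linarith
      have ex1: "exp (-\<kappa> * t) \<le> 1" using \<kappa> t by simp
      have c2: "V (x 0) * exp (-\<kappa> * t) \<le> V (x 0)" using mult_left_le[OF ex1 Vnn] .
      have e2: "e^2 \<le> \<epsilon>^2" using e by (intro power_mono) auto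
      have "(dist (x t) (N1, 0))^2 < \<epsilon>^2"
        using dV(1)[of "x t"] c1 c2 V0 e2 by linarith
      then show "dist (x t) (N1, 0) < \<epsilon>" by (rule power2_less_imp_less) (use \<epsilon> in simp)
    qed
  qed
  have LA: "locally_attractive F (N1, 0)" unfolding locally_attractive_def
  proof (intro exI[of _ "\<rho> / sqrt \<beta>"] conjI allI impI)
    show "\<rho> / sqrt \<beta> > 0" using \<rho> \<beta> by simp
    fix x assume x: "forward_solution F x \<and> dist (x 0) (N1, 0) < \<rho> / sqrt \<beta>"
    have V0: "V (x 0) < \<rho>^2" using init[of x \<rho>] x \<rho> by auto
    have bnd: "norm (dist (x t) (N1, 0)) \<le> sqrt (V (x 0) * exp (-\<kappa> * t))" if "t \<ge> 0" for t
    proof -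
      have "(dist (x t) (N1, 0))^2 \<le> V (x 0) * exp (-\<kappa> * t)"
      proof -
        have "V (x t) \<le> V (x 0) * exp (-\<kappa> * t)" using core[of x] x V0 that by blast
        then show ?thesis using dV(1)[of "x t"] by linarith
      qed
      then have "sqrt ((dist (x t) (N1, 0))^2) \<le> sqrt (V (x 0) * exp (-\<kappa> * t))"
        by (rule real_sqrt_le_mono)
      then show ?thesis by simp
    qed
    have ev: "eventually (\<lambda>t. norm (dist (x t) (N1, 0)) \<le> sqrt (V (x 0) * exp (-\<kappa> * t))) at_top"
      using eventually_ge_at_top[of "0::real"] by (rule eventually_mono) (rule bnd)
    have "((\<lambda>t. dist (x t) (N1, 0)) \<longlongrightarrow> 0) at_top"
      by (rule Lim_null_comparison[OF ev exp_lim[OF \<kappa>(1)]])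
    then show "(x \<longlongrightarrow> (N1, 0)) at_top" using tendsto_dist_iff[of x "(N1, 0)" at_top] by blast
  qed
  show ?thesis unfolding locally_asymptotically_stable_def F_def[symmetric]
    using LS LA eq unfolding eq_ax F_def by simp
qed

theorem theorem6:
  fixes r K h w a b c \<delta> :: real
  defines "F \<equiv> pp_field r K h w a b c \<delta>"
    and "N1 \<equiv> ((K - w) + sqrt ((K - w)^2 - 4 * K * (h - w))) / 2"
    and "N2 \<equiv> ((K - w) - sqrt ((K - w)^2 - 4 * K * (h - w))) / 2"
    and "N3 \<equiv> (K - w) / 2"
  assumes pos: "r > 0" "K > 0" "h > 0" "w > 0" "a > 0" "b > 0" "c > 0" "\<delta> > 0"
    and Kw: "K > w"
    and strong: "h > w"
  shows "(h = (K + w)^2 / (4 * K) \<and> c < \<delta> * (b + N3^2) / N3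
            \<longrightarrow> non_hyperbolic F (N3, 0))
       \<and> (h < (K + w)^2 / (4 * K) \<and> c < \<delta> * (b + N1^2) / N1 \<and> c < \<delta> * (b + N2^2) / N2
            \<longrightarrow> locally_asymptotically_stable F (N1, 0) \<and> unstable F (N2, 0) \<and> saddle F (N2, 0))"
proof (intro conjI impI)
  assume H: "h = (K + w)^2 / (4 * K) \<and> c < \<delta> * (b + N3^2) / N3"
  show "non_hyperbolic F (N3, 0)" unfolding F_def N3_def using part1[OF pos Kw] H by blast
next
  assume H: "h < (K + w)^2 / (4 * K) \<and> c < \<delta> * (b + N1^2) / N1 \<and> c < \<delta> * (b + N2^2) / N2"
  define D where "D = (K - w)^2 - 4 * K * (h - w)"
  have "h * (4 * K) < (K + w)^2" using H pos by (simp add: pos_less_divide_eq)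
  then have Dp: "D > 0" unfolding D_def by (simp add: power2_eq_square algebra_simps)
  define s where "s = sqrt D"
  have s: "s > 0" "s^2 = D" unfolding s_def using Dp by auto
  have N1s: "N1 = ((K - w) + s) / 2" and N2s: "N2 = ((K - w) - s) / 2"
    unfolding N1_def N2_def s_def D_def by simp_all
  have sum: "N1 + N2 = K - w" unfolding N1s N2s by (simp add: field_simps)
  have prod: "N1 * N2 = K * (h - w)"
  proof -
    have "N1 * N2 = ((K - w)^2 - s^2) / 4" unfolding N1s N2s by (simp add: field_simps power2_eq_square)
    then show ?thesis unfolding s(2) D_def by simp
  qed
  have lt: "N2 < N1" unfolding N1s N2s using s by simp
  have N2p: "N2 > 0"
  proof (rule ccontr)
    assume "\<not> N2 > 0"
    then have "N2 \<le> 0" by simp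
    moreover have "N1 \<ge> 0" using sum Kw \<open>N2 \<le> 0\<close> by linarith
    ultimately have "N1 * N2 \<le> 0" by (simp add: mult_nonneg_nonpos)
    moreover have "K * (h - w) > 0" using pos strong by simp
    ultimately show False using prod by simp
  qed
  show "locally_asymptotically_stable F (N1, 0)"
    unfolding F_def using las_N1[OF pos sum prod N2p lt] H by blast
  show "unstable F (N2, 0)"
    unfolding F_def using unstable_N2[OF pos sum prod N2p lt] .
  show "saddle F (N2, 0)"
    unfolding F_def using saddle_N2[OF pos sum prod N2p lt] H by blast
qed

end
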